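(* Let $\lambda,\mu\in P^+$ and let $X\subseteq\mathcal{B}(\lambda)$, $Y\subseteq\mathcal{B}(\mu)$ be extremal subsets. Then $X\otimes Y$ is an extremal subset of $\mathcal{B}(\lambda)\otimes\mathcal{B}(\mu)$ if and only if there is no $i\in I$ and no $x\otimes y\in X\otimes Y$ which is a broken $i$-hinge, i.e. such that $\varepsilon_i(x)>0$, $\varphi_i(x)=0$, $\varepsilon_i(y)=0$, $\varphi_i(y)>0$, and $f_i(y)\notin Y$.
   Context: $\mathfrak g$ is a complex semisimple Lie algebra with Dynkin index set $I$ and dominant weights $P^+$. For $\lambda\in P^+$, $\mathcal{B}(\lambda)$ is Kashiwara's crystal of the irreducible module of highest weight $\lambda$, with operators $e_i,f_i:\mathcal{B}(\lambda)\to\mathcal{B}(\lambda)\sqcup\{0\}$, $\varepsilon_i(b)=\max\{k:e_i^k(b)\ne0\}$, $\varphi_i(b)=\max\{k:f_i^k(b)\ne0\}$. The tensor product crystal $\mathcal{B}(\lambda)\otimes\mathcal{B}(\mu)$ has $e_i(b_1\otimes b_2)=e_i(b_1)\otimes b_2$ if $\varepsilon_i(b_2)\le\varphi_i(b_1)$, else $b_1\otimes e_i(b_2)$; $f_i(b_1\otimes b_2)=f_i(b_1)\otimes b_2$ if $\varepsilon_i(b_2)<\varphi_i(b_1)$, else $b_1\otimes f_i(b_2)$. An $i$-string is a connected component of the graph with edges $b\to f_i(b)$. A subset $X$ of a crystal $\mathcal{B}$ is extremal if $X$ is nonempty and for every $i\in I$ and every $i$-string $S$ of $\mathcal{B}$,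 $S\cap X$ is $\varnothing$, $S$, or $\{b\}$ with $b\in S$, $e_i(b)=0$. *)

theory Defs
  imports Main
begin

(* A crystal is given by a carrier set B and Kashiwara operators
   e i, f i :: 'b => 'b option  (None plays the role of 0). *)

definition iter_op :: "('b \<Rightarrow> 'b option) \<Rightarrow> nat \<Rightarrow> 'b \<Rightarrow> 'b option" where
  "iter_op g k b = ((\<lambda>x. Option.bind x g) ^^ k) (Some b)"

definition eps :: "('i \<Rightarrow> 'b \<Rightarrow> 'b option) \<Rightarrow> 'i \<Rightarrow> 'b \<Rightarrow> nat" where
  "eps e i b = (GREATEST k. iter_op (e i) k b \<noteq> None)"

definition phi :: "('i \<Rightarrow> 'b \<Rightarrow> 'b option) \<Rightarrow> 'i \<Rightarrow> 'b \<Rightarrow> nat" where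
  "phi f i b = (GREATEST k. iter_op (f i) k b \<noteq> None)"

(* Finite seminormal crystal: e_i and f_i are mutually inverse partial maps on B
   and all i-strings are finite (no cycles). Every B(lambda) is of this kind. *)
definition seminormal_crystal ::
  "'i set \<Rightarrow> 'b set \<Rightarrow> ('i \<Rightarrow> 'b \<Rightarrow> 'b option) \<Rightarrow> ('i \<Rightarrow> 'b \<Rightarrow> 'b option) \<Rightarrow> bool" where
  "seminormal_crystal I B e f \<longleftrightarrow> finite B \<and>
     (\<forall>i\<in>I. \<forall>b\<in>B. \<forall>b'. f i b = Some b' \<longrightarrow> b' \<in> B \<and> e i b' = Some b) \<and>
     (\<forall>i\<in>I. \<forall>b\<in>B. \<forall>b'. e i b = Some b' \<longrightarrow> b' \<in> B \<and> f i b' = Some b) \<and>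
     (\<forall>i\<in>I. \<forall>b\<in>B. (\<exists>k. iter_op (f i) k b = None) \<and> (\<exists>k. iter_op (e i) k b = None))"

(* Tensor product rule; b1 \<otimes> b2 is represented by the pair (b1, b2). *)
definition tensor_e ::
  "('i \<Rightarrow> 'a \<Rightarrow> 'a option) \<Rightarrow> ('i \<Rightarrow> 'a \<Rightarrow> 'a option) \<Rightarrow>
   ('i \<Rightarrow> 'b \<Rightarrow> 'b option) \<Rightarrow> ('i \<Rightarrow> 'b \<Rightarrow> 'b option) \<Rightarrow>
   'i \<Rightarrow> 'a \<times> 'b \<Rightarrow> ('a \<times> 'b) option" where
  "tensor_e e1 f1 e2 f2 i p =
     (case p of (b1, b2) \<Rightarrow>
        if eps e2 i b2 \<le> phi f1 i b1 then map_option (\<lambda>x. (x, b2)) (e1 i b1)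
        else map_option (\<lambda>y. (b1, y)) (e2 i b2))"

definition tensor_f ::
  "('i \<Rightarrow> 'a \<Rightarrow> 'a option) \<Rightarrow> ('i \<Rightarrow> 'a \<Rightarrow> 'a option) \<Rightarrow>
   ('i \<Rightarrow> 'b \<Rightarrow> 'b option) \<Rightarrow> ('i \<Rightarrow> 'b \<Rightarrow> 'b option) \<Rightarrow>
   'i \<Rightarrow> 'a \<times> 'b \<Rightarrow> ('a \<times> 'b) option" where
  "tensor_f e1 f1 e2 f2 i p =
     (case p of (b1, b2) \<Rightarrow>
        if eps e2 i b2 < phi f1 i b1 then map_option (\<lambda>x. (x, b2)) (f1 i b1)
        else map_option (\<lambda>y. (b1, y)) (f2 i b2))"

definition string_rel :: "'b set \<Rightarrow> ('i \<Rightarrow> 'b \<Rightarrow> 'b option) \<Rightarrow> 'i \<Rightarrow> 'b \<Rightarrow> 'b \<Rightarrow> bool" where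
  "string_rel B f i x y \<longleftrightarrow> x \<in> B \<and> y \<in> B \<and> (f i x = Some y \<or> f i y = Some x)"

definition i_string :: "'b set \<Rightarrow> ('i \<Rightarrow> 'b \<Rightarrow> 'b option) \<Rightarrow> 'i \<Rightarrow> 'b set \<Rightarrow> bool" where
  "i_string B f i S \<longleftrightarrow> (\<exists>b\<in>B. S = {c \<in> B. (string_rel B f i)\<^sup>*\<^sup>* b c})"

definition extremal ::
  "'i set \<Rightarrow> 'b set \<Rightarrow> ('i \<Rightarrow> 'b \<Rightarrow> 'b option) \<Rightarrow> ('i \<Rightarrow> 'b \<Rightarrow> 'b option) \<Rightarrow> 'b set \<Rightarrow> bool" where
  "extremal I B e f X \<longleftrightarrow> X \<noteq> {} \<and> X \<subseteq> B \<and>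
     (\<forall>i\<in>I. \<forall>S. i_string B f i S \<longrightarrow>
        S \<inter> X = {} \<or> S \<inter> X = S \<or> (\<exists>b\<in>S. S \<inter> X = {b} \<and> e i b = None))"

end

theory Submission
  imports Defs
begin

definition gr :: "('b \<Rightarrow> 'b option) \<Rightarrow> 'b \<Rightarrow> nat" where
  "gr g b = (GREATEST k. iter_op g k b \<noteq> None)"

lemma eps_gr: "eps e i b = gr (e i) b" by (simp add: eps_def gr_def)
lemma phi_gr: "phi f i b = gr (f i) b" by (simp add: phi_def gr_def)

lemma iter0: "iter_op g 0 b = Some b" by (simp add: iter_op_def)
lemma iterSuc: "iter_op g (Suc k) b = Option.bind (iter_op g k b) g" by (simp add: iter_op_def)

lemma bind_funpow_None: "((\<lambda>x. Option.bind x (g::'a \<Rightarrow> 'a option)) ^^ k) None = None"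
  by (induction k) simp_all

lemma iterSuc': "iter_op g (Suc k) b = (case g b of None \<Rightarrow> None | Some c \<Rightarrow> iter_op g k c)"
  unfolding iter_op_def funpow_Suc_right comp_def
  by (simp add: bind_funpow_None split: option.split)

lemma iter_None_add: "iter_op g k b = None \<Longrightarrow> iter_op g (k + m) b = None"
  by (induction m) (auto simp: iterSuc)

lemma iter_None_mono: "iter_op g k b = None \<Longrightarrow> k \<le> k' \<Longrightarrow> iter_op g k' b = None"
  using iter_None_add[of g k b "k' - k"] by simp

lemma iter_bound: "iter_op g k0 b = None \<Longrightarrow> iter_op g k b \<noteq> None \<Longrightarrow> k < k0"
  using iter_None_mono[of g k0 b k] by force

lemma gr_None: "g b = None \<Longrightarrow> gr g b = 0"
  unfolding gr_def
proof (rule Greatest_equality)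
  assume "g b = None"
  show "iter_op g 0 b \<noteq> None" by (simp add: iter0)
  fix y assume "iter_op g y b \<noteq> None"
  moreover have "iter_op g 1 b = None" using \<open>g b = None\<close> by (simp add: iterSuc')
  ultimately show "y \<le> 0" using iter_bound[of g 1 b y] by simp
qed

lemma gr_Some: assumes "g b = Some c" "iter_op g k0 c = None"
  shows "gr g b = Suc (gr g c)"
proof -
  let ?m = "gr g c"
  have bd: "\<And>y. iter_op g y c \<noteq> None \<Longrightarrow> y \<le> k0"
    using iter_bound[OF assms(2)] by (simp add: less_imp_le)
  have m1: "iter_op g ?m c \<noteq> None" unfolding gr_def
    by (rule GreatestI_nat[of _ 0 k0]) (auto simp: iter0 bd)
  have m2: "\<And>y. iter_op g y c \<noteq> None \<Longrightarrow> y \<le> ?m" unfolding gr_def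
    by (rule Greatest_le_nat[of _ _ k0]) (auto simp: bd)
  show ?thesis unfolding gr_def[of g b]
  proof (rule Greatest_equality)
    show "iter_op g (Suc ?m) b \<noteq> None" using m1 assms(1) by (simp add: iterSuc')
    fix y assume y: "iter_op g y b \<noteq> None"
    show "y \<le> Suc ?m"
    proof (cases y)
      case 0 then show ?thesis by simp
    next
      case (Suc y') then show ?thesis using y assms(1) m2[of y'] by (simp add: iterSuc')
    qed
  qed
qed

lemma gr_pos: "gr g b > 0 \<Longrightarrow> g b \<noteq> None" using gr_None by fastforce

definition okc :: "'b set \<Rightarrow> ('b \<Rightarrow> 'b option) \<Rightarrow> ('b \<Rightarrow> 'b option) \<Rightarrow> bool" where
  "okc B e f \<longleftrightarrow> (\<forall>b\<in>B. \<forall>b'. f b = Some b' \<longrightarrow> b' \<in> B \<and> e b' = Some b) \<and>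
     (\<forall>b\<in>B. \<forall>b'. e b = Some b' \<longrightarrow> b' \<in> B \<and> f b' = Some b) \<and>
     (\<forall>b\<in>B. (\<exists>k. iter_op f k b = None) \<and> (\<exists>k. iter_op e k b = None))"

lemma semi_okc: "seminormal_crystal I B e f \<Longrightarrow> i \<in> I \<Longrightarrow> okc B (e i) (f i)"
  unfolding seminormal_crystal_def okc_def by blast

lemma okc_f: assumes "okc B e f" "b \<in> B" "f b = Some c"
  shows "c \<in> B" "e c = Some b" "gr f b = Suc (gr f c)" "gr e c = Suc (gr e b)"
proof -
  show c: "c \<in> B" and ec: "e c = Some b" using assms unfolding okc_def by blast+
  obtain k where "iter_op f k c = None" using assms c unfolding okc_def by blast
  then show "gr f b = Suc (gr f c)" using gr_Some assms(3) by metis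
  obtain k where "iter_op e k b = None" using assms unfolding okc_def by blast
  then show "gr e c = Suc (gr e b)" using gr_Some ec by metis
qed

lemma okc_e: assumes "okc B e f" "b \<in> B" "e b = Some c"
  shows "c \<in> B" "f c = Some b" "gr e b = Suc (gr e c)" "gr f c = Suc (gr f b)"
proof -
  show c: "c \<in> B" and fc: "f c = Some b" using assms unfolding okc_def by blast+
  obtain k where "iter_op e k c = None" using assms c unfolding okc_def by blast
  then show "gr e b = Suc (gr e c)" using gr_Some assms(3) by metis
  obtain k where "iter_op f k b = None" using assms unfolding okc_def by blast
  then show "gr f c = Suc (gr f b)" using gr_Some fc by metis
qed

lemma string_rel_sym: "string_rel B f i x y \<Longrightarrow> string_rel B f i y x"
  unfolding string_rel_def by blast

lemma rtr_sym: "(string_rel B f i)\<^sup>*\<^sup>* x y \<Longrightarrow> (string_rel B f i)\<^sup>*\<^sup>* y x"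
proof (induction rule: rtranclp_induct)
  case base then show ?case by simp
next
  case (step y z)
  then show ?case using string_rel_sym converse_rtranclp_into_rtranclp by metis
qed

definition upto_e :: "('b \<Rightarrow> 'b option) \<Rightarrow> 'b \<Rightarrow> 'b \<Rightarrow> bool" where
  "upto_e e c t \<longleftrightarrow> (\<exists>k. iter_op e k c = Some t \<and> e t = None)"

lemma upto_eexists: "iter_op e k c = None \<Longrightarrow> \<exists>t. upto_e e c t"
proof (induction k arbitrary: c)
  case 0 then show ?case by (simp add: iter0)
next
  case (Suc k)
  show ?case
  proof (cases "e c")
    case None
    then show ?thesis unfolding upto_e_def by (intro exI[of _ c] exI[of _ 0]) (simp add: iter0)
  next
    case (Some c')
    then have "iter_op e k c' = None" using Suc.prems by (simp add: iterSuc')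
    then obtain t k' where "iter_op e k' c' = Some t" "e t = None" using Suc.IH unfolding upto_e_def by blast
    then show ?thesis unfolding upto_e_def using Some
      by (intro exI[of _ t] exI[of _ "Suc k'"]) (simp add: iterSuc')
  qed
qed

lemma upto_eunique_aux: "iter_op e k c = Some t \<Longrightarrow> e t = None \<Longrightarrow> k < k' \<Longrightarrow> iter_op e k' c = None"
  by (rule iter_None_mono[of e "Suc k"]) (auto simp: iterSuc)

lemma upto_eunique: "upto_e e c t \<Longrightarrow> upto_e e c t' \<Longrightarrow> t = t'"
  unfolding upto_e_def
  by (metis linorder_neqE_nat option.distinct(1) option.inject upto_eunique_aux)

lemma upto_estep: assumes "e d = Some c" shows "upto_e e d t \<longleftrightarrow> upto_e e c t"
proof
  assume "upto_e e d t"
  then obtain k where k: "iter_op e k d = Some t" "e t = None" unfolding upto_e_def by blast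
  show "upto_e e c t"
  proof (cases k)
    case 0 then show ?thesis using k assms by (simp add: iter0)
  next
    case (Suc k') then show ?thesis using k assms unfolding upto_e_def by (auto simp: iterSuc')
  qed
next
  assume "upto_e e c t"
  then obtain k where k: "iter_op e k c = Some t" "e t = None" unfolding upto_e_def by blast
  then show "upto_e e d t" unfolding upto_e_def using assms
    by (intro exI[of _ "Suc k"]) (simp add: iterSuc')
qed

lemma generic_string:
  fixes e f :: "'i \<Rightarrow> 'b \<Rightarrow> 'b option"
  assumes H1: "\<And>b b'. b \<in> B \<Longrightarrow> f i b = Some b' \<Longrightarrow> b' \<in> B \<and> e i b' = Some b"
    and H2: "\<And>b b'. b \<in> B \<Longrightarrow> e i b = Some b' \<Longrightarrow> b' \<in> B \<and> f i b' = Some b"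
    and H3: "\<And>b. b \<in> B \<Longrightarrow> \<exists>k. iter_op (e i) k b = None"
    and L1: "\<And>z w. z \<in> Z \<Longrightarrow> e i z = Some w \<Longrightarrow> w \<in> Z"
    and L2: "\<And>z w. z \<in> Z \<Longrightarrow> e i z \<noteq> None \<Longrightarrow> f i z = Some w \<Longrightarrow> w \<in> Z"
    and ZB: "Z \<subseteq> B"
    and S: "i_string B f i S"
  shows "S \<inter> Z = {} \<or> S \<inter> Z = S \<or> (\<exists>b\<in>S. S \<inter> Z = {b} \<and> e i b = None)"
proof -
  let ?R = "string_rel B f i"
  obtain b where b: "b \<in> B" "S = {c \<in> B. ?R\<^sup>*\<^sup>* b c}" using S unfolding i_string_def by blast
  define Zp where "Zp = {c \<in> Z. \<forall>w. f i c = Some w \<longrightarrow> w \<in> Z}"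
  have Zp_closed: "c \<in> Zp \<Longrightarrow> ?R c d \<Longrightarrow> d \<in> Zp" for c d
  proof -
    assume c: "c \<in> Zp" and r: "?R c d"
    from r have cB: "c \<in> B" and dB: "d \<in> B" and ed: "f i c = Some d \<or> f i d = Some c"
      unfolding string_rel_def by auto
    from ed show "d \<in> Zp"
    proof
      assume fc: "f i c = Some d"
      then have dZ: "d \<in> Z" using c unfolding Zp_def by blast
      have "e i d = Some c" using H1[OF cB fc] by blast
      then show ?thesis using L2[OF dZ] dZ unfolding Zp_def by blast
    next
      assume fd: "f i d = Some c"
      then have "e i c = Some d" using H1[OF dB fd] by blast
      then have "d \<in> Z" using L1 c unfolding Zp_def by blast
      then show ?thesis using fd c unfolding Zp_def by auto
    qed
  qed
  have Zp_rtr: "?R\<^sup>*\<^sup>* c d \<Longrightarrow> c \<in> Zp \<Longrightarrow> d \<in> Zp" for c d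
    by (induction rule: rtranclp_induct) (auto intro: Zp_closed)
  show ?thesis
  proof (cases "\<exists>z\<in>S \<inter> Z. e i z \<noteq> None")
    case True
    then obtain z where z: "z \<in> S" "z \<in> Z" "e i z \<noteq> None" by blast
    have zZp: "z \<in> Zp" using L2 z unfolding Zp_def by blast
    have "S \<subseteq> Z"
    proof
      fix c assume "c \<in> S"
      then have "?R\<^sup>*\<^sup>* b c" using b by blast
      moreover have "?R\<^sup>*\<^sup>* b z" using z b by blast
      then have "?R\<^sup>*\<^sup>* z b" by (rule rtr_sym)
      ultimately have "?R\<^sup>*\<^sup>* z c" by (rule rtranclp_trans[rotated])
      then show "c \<in> Z" using Zp_rtr zZp unfolding Zp_def by blast
    qed
    then show ?thesis by blast
  next
    case False
    obtain t where t: "upto_e (e i) b t" using H3[OF b(1)] upto_eexists by metis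
    have inv: "?R\<^sup>*\<^sup>* b c \<Longrightarrow> upto_e (e i) c t" for c
    proof (induction rule: rtranclp_induct)
      case base then show ?case by (rule t)
    next
      case (step c d)
      then have cB: "c \<in> B" and dB: "d \<in> B" and ed: "f i c = Some d \<or> f i d = Some c"
        unfolding string_rel_def by auto
      from ed show ?case
      proof
        assume "f i c = Some d"
        then have "e i d = Some c" using H1 cB by blast
        then show ?thesis using upto_estep step.IH by metis
      next
        assume "f i d = Some c"
        then have "e i c = Some d" using H1 dB by blast
        then show ?thesis using upto_estep step.IH by metis
      qed
    qed
    have src: "s \<in> S \<Longrightarrow> e i s = None \<Longrightarrow> s = t" for s
    proof -
      assume "s \<in> S" "e i s = None"
      then have "upto_e (e i) s t" "upto_e (e i) s s" using inv b unfolding upto_e_def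
        by (auto intro: exI[of _ 0] simp: iter0)
      then show "s = t" using upto_eunique by metis
    qed
    have "S \<inter> Z \<subseteq> {t}" using False src by blast
    then have "S \<inter> Z = {} \<or> S \<inter> Z = {t}" by blast
    moreover have "S \<inter> Z = {t} \<Longrightarrow> e i t = None" using False by blast
    ultimately show ?thesis by blast
  qed
qed

lemma extremal_local:
  assumes ex: "extremal I B e f X" and i: "i \<in> I" and ok: "okc B (e i) (f i)"
    and x: "x \<in> X"
  shows "\<And>w. e i x = Some w \<Longrightarrow> w \<in> X"
    and "\<And>w. e i x \<noteq> None \<Longrightarrow> f i x = Some w \<Longrightarrow> w \<in> X"
proof -
  have XB: "X \<subseteq> B" using ex unfolding extremal_def by blast
  then have xB: "x \<in> B" using x by blast
  define S where "S = {c \<in> B. (string_rel B f i)\<^sup>*\<^sup>* x c}"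
  have Si: "i_string B f i S" unfolding i_string_def S_def using xB by blast
  have tri: "S \<inter> X = {} \<or> S \<inter> X = S \<or> (\<exists>b\<in>S. S \<inter> X = {b} \<and> e i b = None)"
    using ex i Si unfolding extremal_def by blast
  have xS: "x \<in> S" unfolding S_def using xB by blast
  have edge: "w \<in> B \<Longrightarrow> string_rel B f i x w \<Longrightarrow> w \<in> S" for w
    unfolding S_def by auto
  {
    fix w assume ew: "e i x = Some w"
    have wB: "w \<in> B" "f i w = Some x" using okc_e(1,2)[OF ok xB ew] by auto
    then have "w \<in> S" using edge xB unfolding string_rel_def by blast
    moreover have "\<not> (\<exists>b\<in>S. S \<inter> X = {b} \<and> e i b = None)" using ew xS x by force
    ultimately show "w \<in> X" using tri xS x by blast
  }
  {
    fix w assume ne: "e i x \<noteq> None" and fw: "f i x = Some w"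
    have wB: "w \<in> B" using okc_f(1)[OF ok xB fw] by auto
    then have "w \<in> S" using edge xB fw unfolding string_rel_def by blast
    moreover have "\<not> (\<exists>b\<in>S. S \<inter> X = {b} \<and> e i b = None)" using ne xS x by force
    ultimately show "w \<in> X" using tri xS x by blast
  }
qed


lemma TE_simp: "tensor_e ea fa eb fb i (x, y) =
  (if gr (eb i) y \<le> gr (fa i) x then map_option (\<lambda>x'. (x', y)) (ea i x)
   else map_option (\<lambda>y'. (x, y')) (eb i y))"
  by (simp add: tensor_e_def eps_gr phi_gr)

lemma TF_simp: "tensor_f ea fa eb fb i (x, y) =
  (if gr (eb i) y < gr (fa i) x then map_option (\<lambda>x'. (x', y)) (fa i x)
   else map_option (\<lambda>y'. (x, y')) (fb i y))"
  by (simp add: tensor_f_def eps_gr phi_gr)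

lemma tensor_H1:
  assumes ok1: "okc BA (ea i) (fa i)" and ok2: "okc BB (eb i) (fb i)"
    and x: "x \<in> BA" and y: "y \<in> BB" and tf: "tensor_f ea fa eb fb i (x, y) = Some p"
  shows "p \<in> BA \<times> BB \<and> tensor_e ea fa eb fb i p = Some (x, y)"
proof (cases "gr (eb i) y < gr (fa i) x")
  case True
  then obtain x' where fx: "fa i x = Some x'" and p: "p = (x', y)" using tf by (auto simp: TF_simp)
  note o = okc_f[OF ok1 x fx]
  show ?thesis using o True y p by (auto simp: TE_simp)
next
  case False
  then obtain y' where fy: "fb i y = Some y'" and p: "p = (x, y')" using tf by (auto simp: TF_simp)
  note o = okc_f[OF ok2 y fy]
  show ?thesis using o False x p by (auto simp: TE_simp)
qed

lemma tensor_H2: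
  assumes ok1: "okc BA (ea i) (fa i)" and ok2: "okc BB (eb i) (fb i)"
    and x: "x \<in> BA" and y: "y \<in> BB" and te: "tensor_e ea fa eb fb i (x, y) = Some p"
  shows "p \<in> BA \<times> BB \<and> tensor_f ea fa eb fb i p = Some (x, y)"
proof (cases "gr (eb i) y \<le> gr (fa i) x")
  case True
  then obtain x' where ex: "ea i x = Some x'" and p: "p = (x', y)" using te by (auto simp: TE_simp)
  note o = okc_e[OF ok1 x ex]
  show ?thesis using o True y p by (auto simp: TF_simp)
next
  case False
  then obtain y' where ey: "eb i y = Some y'" and p: "p = (x, y')" using te by (auto simp: TE_simp)
  note o = okc_e[OF ok2 y ey]
  show ?thesis using o False x p by (auto simp: TF_simp)
qed

lemma tensor_H3:
  assumes ok1: "okc BA (ea i) (fa i)" and ok2: "okc BB (eb i) (fb i)"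
  shows "x \<in> BA \<Longrightarrow> y \<in> BB \<Longrightarrow> gr (ea i) x + gr (eb i) y = n \<Longrightarrow>
     \<exists>k. iter_op (tensor_e ea fa eb fb i) k (x, y) = None"
proof (induction n arbitrary: x y rule: less_induct)
  case (less n)
  show ?case
  proof (cases "tensor_e ea fa eb fb i (x, y)")
    case None
    then show ?thesis by (intro exI[of _ 1]) (simp add: iterSuc')
  next
    case (Some p)
    obtain x' y' where p: "p = (x', y')" by (cases p)
    have "x' \<in> BA \<and> y' \<in> BB \<and> gr (ea i) x' + gr (eb i) y' < n"
    proof (cases "gr (eb i) y \<le> gr (fa i) x")
      case True
      then have ex: "ea i x = Some x'" and yy: "y' = y" using Some p by (auto simp: TE_simp)
      show ?thesis using okc_e[OF ok1 less.prems(1) ex] yy less.prems by auto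
    next
      case False
      then have ey: "eb i y = Some y'" and xx: "x' = x" using Some p by (auto simp: TE_simp)
      show ?thesis using okc_e[OF ok2 less.prems(2) ey] xx less.prems by auto
    qed
    then obtain k where "iter_op (tensor_e ea fa eb fb i) k (x', y') = None"
      using less.IH by blast
    then show ?thesis using Some p by (intro exI[of _ "Suc k"]) (simp add: iterSuc')
  qed
qed

theorem theorem7p3:
  fixes I :: "'i set" and B1 :: "'a set" and B2 :: "'b set"
    and e1 f1 :: "'i \<Rightarrow> 'a \<Rightarrow> 'a option" and e2 f2 :: "'i \<Rightarrow> 'b \<Rightarrow> 'b option"
    and X :: "'a set" and Y :: "'b set"
  assumes "seminormal_crystal I B1 e1 f1" and "seminormal_crystal I B2 e2 f2"
    and "extremal I B1 e1 f1 X" and "extremal I B2 e2 f2 Y"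
  shows "extremal I (B1 \<times> B2) (tensor_e e1 f1 e2 f2) (tensor_f e1 f1 e2 f2) (X \<times> Y) \<longleftrightarrow>
    \<not> (\<exists>i\<in>I. \<exists>x\<in>X. \<exists>y\<in>Y. eps e1 i x > 0 \<and> phi f1 i x = 0 \<and> eps e2 i y = 0 \<and>
          phi f2 i y > 0 \<and> f2 i y \<notin> Some ` Y)"
proof -
  note sc1 = assms(1) and sc2 = assms(2) and ex1 = assms(3) and ex2 = assms(4)
  have XB: "X \<subseteq> B1" "X \<noteq> {}" using ex1 unfolding extremal_def by auto
  have YB: "Y \<subseteq> B2" "Y \<noteq> {}" using ex2 unfolding extremal_def by auto
  let ?TE = "tensor_e e1 f1 e2 f2" and ?TF = "tensor_f e1 f1 e2 f2"
  show ?thesis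
  proof
    assume ext: "extremal I (B1 \<times> B2) ?TE ?TF (X \<times> Y)"
    show "\<not> (\<exists>i\<in>I. \<exists>x\<in>X. \<exists>y\<in>Y. eps e1 i x > 0 \<and> phi f1 i x = 0 \<and> eps e2 i y = 0 \<and>
          phi f2 i y > 0 \<and> f2 i y \<notin> Some ` Y)"
    proof
      assume "\<exists>i\<in>I. \<exists>x\<in>X. \<exists>y\<in>Y. eps e1 i x > 0 \<and> phi f1 i x = 0 \<and> eps e2 i y = 0 \<and>
          phi f2 i y > 0 \<and> f2 i y \<notin> Some ` Y"
      then obtain i x y where i: "i \<in> I" and x: "x \<in> X" and y: "y \<in> Y"
        and h: "gr (e1 i) x > 0" "gr (f1 i) x = 0" "gr (e2 i) y = 0" "gr (f2 i) y > 0"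
           "f2 i y \<notin> Some ` Y"
        by (auto simp: eps_gr phi_gr)
      have ok1: "okc B1 (e1 i) (f1 i)" using semi_okc[OF sc1 i] .
      have ok2: "okc B2 (e2 i) (f2 i)" using semi_okc[OF sc2 i] .
      have xB: "x \<in> B1" and yB: "y \<in> B2" using x y XB YB by auto
      obtain y1 where fy: "f2 i y = Some y1" using gr_pos[OF h(4)] by auto
      obtain x0 where ex: "e1 i x = Some x0" using gr_pos[OF h(1)] by auto
      have y1: "y1 \<in> B2" "y1 \<notin> Y" using okc_f(1)[OF ok2 yB fy] h(5) fy by auto
      have tf: "?TF i (x, y) = Some (x, y1)" using h fy by (simp add: TF_simp)
      have te: "?TE i (x, y) \<noteq> None" using h ex by (simp add: TE_simp)
      define S where "S = {c \<in> B1 \<times> B2. (string_rel (B1 \<times> B2) ?TF i)\<^sup>*\<^sup>* (x, y) c}"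
      have Si: "i_string (B1 \<times> B2) ?TF i S" unfolding i_string_def S_def using xB yB by blast
      have xyS: "(x, y) \<in> S" unfolding S_def using xB yB by auto
      have xy1S: "(x, y1) \<in> S" unfolding S_def using xB yB y1 tf
        by (auto simp: string_rel_def)
      have tri: "S \<inter> (X \<times> Y) = {} \<or> S \<inter> (X \<times> Y) = S \<or>
          (\<exists>b\<in>S. S \<inter> (X \<times> Y) = {b} \<and> ?TE i b = None)"
        using ext i Si unfolding extremal_def by blast
      show False
      proof -
        have "S \<inter> (X \<times> Y) \<noteq> {}" using xyS x y by blast
        moreover have "S \<inter> (X \<times> Y) \<noteq> S" using xy1S y1 by blast
        moreover have "\<not> (\<exists>b\<in>S. S \<inter> (X \<times> Y) = {b} \<and> ?TE i b = None)"
          using xyS x y te by force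
        ultimately show False using tri by blast
      qed
    qed
  next
    assume nh: "\<not> (\<exists>i\<in>I. \<exists>x\<in>X. \<exists>y\<in>Y. eps e1 i x > 0 \<and> phi f1 i x = 0 \<and> eps e2 i y = 0 \<and>
          phi f2 i y > 0 \<and> f2 i y \<notin> Some ` Y)"
    show "extremal I (B1 \<times> B2) ?TE ?TF (X \<times> Y)"
      unfolding extremal_def
    proof (intro conjI ballI allI impI)
      show "X \<times> Y \<noteq> {}" using XB YB by auto
      show "X \<times> Y \<subseteq> B1 \<times> B2" using XB YB by auto
      fix i S assume i: "i \<in> I" and Si: "i_string (B1 \<times> B2) ?TF i S"
      have ok1: "okc B1 (e1 i) (f1 i)" using semi_okc[OF sc1 i] .
      have ok2: "okc B2 (e2 i) (f2 i)" using semi_okc[OF sc2 i] .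
      note Xl = extremal_local[OF ex1 i ok1] and Yl = extremal_local[OF ex2 i ok2]
      show "S \<inter> (X \<times> Y) = {} \<or> S \<inter> (X \<times> Y) = S \<or>
          (\<exists>b\<in>S. S \<inter> (X \<times> Y) = {b} \<and> ?TE i b = None)"
      proof (rule generic_string[OF _ _ _ _ _ _ Si])
        show "\<And>b b'. b \<in> B1 \<times> B2 \<Longrightarrow> ?TF i b = Some b' \<Longrightarrow> b' \<in> B1 \<times> B2 \<and> ?TE i b' = Some b"
          using tensor_H1[where ea=e1 and fa=f1 and eb=e2 and fb=f2 and i=i, OF ok1 ok2] by fast
        show "\<And>b b'. b \<in> B1 \<times> B2 \<Longrightarrow> ?TE i b = Some b' \<Longrightarrow> b' \<in> B1 \<times> B2 \<and> ?TF i b' = Some b"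
          using tensor_H2[where ea=e1 and fa=f1 and eb=e2 and fb=f2 and i=i, OF ok1 ok2] by fast
        show "\<And>b. b \<in> B1 \<times> B2 \<Longrightarrow> \<exists>k. iter_op (?TE i) k b = None"
          using tensor_H3[where ea=e1 and fa=f1 and eb=e2 and fb=f2 and i=i, OF ok1 ok2] by fast
        show "X \<times> Y \<subseteq> B1 \<times> B2" using XB YB by auto
        show "\<And>z w. z \<in> X \<times> Y \<Longrightarrow> ?TE i z = Some w \<Longrightarrow> w \<in> X \<times> Y"
        proof -
          fix z w assume z: "z \<in> X \<times> Y" and te: "?TE i z = Some w"
          obtain x y where zz: "z = (x, y)" and x: "x \<in> X" and y: "y \<in> Y" using z by blast
          show "w \<in> X \<times> Y"
          proof (cases "gr (e2 i) y \<le> gr (f1 i) x")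
            case True
            then obtain x' where "e1 i x = Some x'" "w = (x', y)" using te zz by (auto simp: TE_simp)
            then show ?thesis using Xl(1)[OF x] y by auto
          next
            case False
            then obtain y' where "e2 i y = Some y'" "w = (x, y')" using te zz by (auto simp: TE_simp)
            then show ?thesis using Yl(1)[OF y] x by auto
          qed
        qed
        show "\<And>z w. z \<in> X \<times> Y \<Longrightarrow> ?TE i z \<noteq> None \<Longrightarrow> ?TF i z = Some w \<Longrightarrow> w \<in> X \<times> Y"
        proof -
          fix z w assume z: "z \<in> X \<times> Y" and te: "?TE i z \<noteq> None" and tf: "?TF i z = Some w"
          obtain x y where zz: "z = (x, y)" and x: "x \<in> X" and y: "y \<in> Y" using z by blast
          have xB: "x \<in> B1" and yB: "y \<in> B2" using x y XB YB by auto
          show "w \<in> X \<times> Y"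
          proof (cases "gr (e2 i) y < gr (f1 i) x")
            case True
            then obtain x' where fx: "f1 i x = Some x'" and w: "w = (x', y)" using tf zz by (auto simp: TF_simp)
            have "e1 i x \<noteq> None" using te zz True by (auto simp: TE_simp)
            then show ?thesis using Xl(2)[OF x _ fx] y w by auto
          next
            case False
            then obtain y' where fy: "f2 i y = Some y'" and w: "w = (x, y')" using tf zz by (auto simp: TF_simp)
            show ?thesis
            proof (cases "e2 i y = None")
              case False
              then show ?thesis using Yl(2)[OF y _ fy] x w by auto
            next
              case True
              have e0: "gr (e2 i) y = 0" using gr_None[of "e2 i" y] True by simp
              then have p0: "gr (f1 i) x = 0" using False by simp
              have "e1 i x \<noteq> None" using te zz e0 p0 by (auto simp: TE_simp)
              then obtain x0 where ex: "e1 i x = Some x0" by auto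
              have ep: "gr (e1 i) x > 0" using okc_e(3)[OF ok1 xB ex] by simp
              have fp: "gr (f2 i) y > 0" using okc_f(3)[OF ok2 yB fy] by simp
              have "f2 i y \<in> Some ` Y" using nh i x y ep p0 e0 fp unfolding eps_gr phi_gr by blast
              then show ?thesis using fy w x by auto
            qed
          qed
        qed
      qed
    qed
  qed
qed

end
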